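(* Let $k,\ell$ be positive integers, $0<\sigma\le 1$, $1<p\le 2$ and $H\colon\mathbb{N}\to\mathbb{R}$ a growth function. Set $L=\lceil\ell\,\sigma^{-2}(p-1)^{-1}\rceil$ and define $(n_i)$ by $n_0=0$ and $n_{i+1}=n_i+\lceil\sigma^2\,\ell\,H(n_i)^2(p-1)^{-1}\rceil$. Let $(\Omega,\mathcal{F},\mathbb{P})$ be a probability space and $(\Sigma_i)_{i\in\mathbb{N}}$ an increasing sequence of $k$-semirings on $\Omega$ with $\Sigma_i\subseteq\mathcal{F}$ for all $i$. Let $\mathcal{C}$ be a family in $L_p(\Omega,\mathcal{F},\mathbb{P})$ with $|\mathcal{C}|=\ell$ and $\|f\|_{L_p}\le 1$ for every $f\in\mathcal{C}$. Then there exist $j\in\{0,\dots,L-1\}$, $J\in\{n_j,\dots,n_{j+1}\}$ and partitions $\mathcal{P},\mathcal{Q}$ of $\Omega$ such that: (i) $\mathcal{P}\subseteq\Sigma_{n_j}$ and $\mathcal{Q}\subseteq\Sigma_J$; (ii) $|\mathcal{P}|\le(k+1)^{n_j}$ and $|\mathcal{Q}|\le(k+1)^J$; (iii) $\mathcal{Q}$ is a refinement of $\mathcal{P}$; (iv) for every $f\in\mathcal{C}$, $\|\mathbb{E}(f\mid\mathcal{A}_{\mathcal{Q}})-\mathbb{E}(f\mid\mathcal{A}_{\mathcal{P}})\|_{L_p}\le\sigma$ and $\|f-\mathbb{E}(f\mid\mathcal{A}_{\mathcal{Q}})\|_{\Sigma_{J+1}}\le 1/H(n_j)$.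
   Context: $\mathbb{N}=\{0,1,2,\dots\}$. A growth function is an increasing function $H$ with $H(n)\ge n+1$ for all $n\in\mathbb{N}$. A collection $\Sigma$ of subsets of a nonempty set $\Omega$ is a $k$-semiring on $\Omega$ if: $\emptyset,\Omega\in\Sigma$; $S\cap T\in\Sigma$ for $S,T\in\Sigma$; for $S,T\in\Sigma$ there exist $\ell'\in\{1,\dots,k\}$ and pairwise disjoint $R_1,\dots,R_{\ell'}\in\Sigma$ with $S\setminus T=R_1\cup\dots\cup R_{\ell'}$. The $\Sigma$-uniformity norm is $\|g\|_{\Sigma}=\sup\{|\int_S g\,d\mathbb{P}|:S\in\Sigma\}$. For a finite partition $\mathcal{P}$, $\mathcal{A}_{\mathcal{P}}$ is the $\sigma$-algebra generated by $\mathcal{P}$; $\mathcal{P}\subseteq\Sigma$ means every member of $\mathcal{P}$ lies in $\Sigma$. *)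

theory Defs
  imports "HOL-Probability.Probability"
begin

definition growth_function :: "(nat \<Rightarrow> real) \<Rightarrow> bool" where
  "growth_function H \<longleftrightarrow> mono H \<and> (\<forall>n. H n \<ge> real n + 1)"

definition k_semiring :: "nat \<Rightarrow> 'a set \<Rightarrow> 'a set set \<Rightarrow> bool" where
  "k_semiring k \<Omega> \<Sigma> \<longleftrightarrow>
     \<Omega> \<noteq> {} \<and> \<Sigma> \<subseteq> Pow \<Omega> \<and> {} \<in> \<Sigma> \<and> \<Omega> \<in> \<Sigma> \<and>
     (\<forall>S\<in>\<Sigma>. \<forall>T\<in>\<Sigma>. S \<inter> T \<in> \<Sigma>) \<and>
     (\<forall>S\<in>\<Sigma>. \<forall>T\<in>\<Sigma>. \<exists>l::nat. \<exists>R::nat \<Rightarrow> 'a set.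
        1 \<le> l \<and> l \<le> k \<and> (\<forall>i<l. R i \<in> \<Sigma>) \<and> disjoint_family_on R {..<l} \<and>
        S - T = (\<Union>i<l. R i))"

definition in_Lp :: "'a measure \<Rightarrow> real \<Rightarrow> ('a \<Rightarrow> real) \<Rightarrow> bool" where
  "in_Lp M p f \<longleftrightarrow> f \<in> borel_measurable M \<and> integrable M (\<lambda>x. \<bar>f x\<bar> powr p)"

definition Lp_norm :: "'a measure \<Rightarrow> real \<Rightarrow> ('a \<Rightarrow> real) \<Rightarrow> real" where
  "Lp_norm M p f = (\<integral>x. \<bar>f x\<bar> powr p \<partial>M) powr (1 / p)"

definition unif_norm :: "'a measure \<Rightarrow> 'a set set \<Rightarrow> ('a \<Rightarrow> real) \<Rightarrow> real" where
  "unif_norm M \<Sigma> g = (SUP S\<in>\<Sigma>. \<bar>set_lebesgue_integral M S g\<bar>)"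

definition finite_partition :: "'a set \<Rightarrow> 'a set set \<Rightarrow> bool" where
  "finite_partition \<Omega> P \<longleftrightarrow> finite P \<and> partition_on \<Omega> P"

definition part_algebra :: "'a measure \<Rightarrow> 'a set set \<Rightarrow> 'a measure" where
  "part_algebra M P = sigma (space M) P"

definition refines :: "'a set set \<Rightarrow> 'a set set \<Rightarrow> bool" where
  "refines Q P \<longleftrightarrow> (\<forall>B\<in>Q. \<exists>A\<in>P. B \<subseteq> A)"

fun n_seq :: "real \<Rightarrow> nat \<Rightarrow> real \<Rightarrow> (nat \<Rightarrow> real) \<Rightarrow> nat \<Rightarrow> nat" where
  "n_seq \<sigma> l p H 0 = 0"
| "n_seq \<sigma> l p H (Suc i) =
     n_seq \<sigma> l p H i + nat \<lceil>\<sigma>^2 * real l * (H (n_seq \<sigma> l p H i))^2 / (p - 1)\<rceil>"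

definition L_bound :: "real \<Rightarrow> nat \<Rightarrow> real \<Rightarrow> nat" where
  "L_bound \<sigma> l p = nat \<lceil>real l / (\<sigma>^2 * (p - 1))\<rceil>"

end

theory Submission
  imports Defs
begin



lemma d1: fixes p x :: real assumes "-1 < x"
  shows "((\<lambda>x. (1 + x) powr p) has_real_derivative p * (1 + x) powr (p - 1)) (at x)"
  using assms by (auto intro!: derivative_eq_intros)
lemma d2: fixes p x :: real assumes "x < 1"
  shows "((\<lambda>x. (1 - x) powr p) has_real_derivative - (p * (1 - x) powr (p - 1))) (at x)"
  using assms by (auto intro!: derivative_eq_intros)
lemma d3: fixes p c x :: real assumes "0 < 1 + c * x^2"
  shows "((\<lambda>x. (1 + c * x^2) powr p) has_real_derivative p * (1 + c * x^2) powr (p - 1) * (c * (2 * x))) (at x)"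
  using assms by (auto intro!: derivative_eq_intros simp: power2_eq_square)
lemma c1: fixes p w :: real assumes "0 < p" "w \<le> 1"
  shows "continuous_on {0..w} (\<lambda>x. (1 - x) powr p)"
  using assms by (intro continuous_on_powr' continuous_intros) auto

lemma amgm_two: fixes A B :: real assumes "A > 0" "B > 0" "A * B \<ge> 1" shows "A + B \<ge> 2"
proof (rule ccontr)
  assume "\<not> ?thesis"
  hence "A + B < 2" by simp
  have "0 \<le> (A - B) * (A - B)" by simp
  hence "4 * (A * B) \<le> (A + B) * (A + B)" by (simp add: algebra_simps)
  also have "\<dots> < 2 * 2" using \<open>A + B < 2\<close> assms by (intro mult_strict_mono) auto
  finally show False using assms by simp
qed

lemma aux_deriv1:
  fixes s x :: real assumes "s \<le> 0" "0 \<le> x" "x < 1"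
  shows "(1 + x) powr s + (1 - x) powr s \<ge> 2"
proof -
  have "(1 + x) powr s * (1 - x) powr s = (1 - x^2) powr s"
    using assms by (simp add: powr_mult[symmetric] power2_eq_square algebra_simps)
  also have "\<dots> \<ge> 1"
  proof -
    have "0 < 1 - x^2" using assms by (simp add: abs_square_less_1)
    moreover have "1 - x^2 \<le> 1" by simp
    ultimately have "(1 - x^2) powr 0 \<le> (1 - x^2) powr s" using assms
      by (intro powr_mono') auto
    thus ?thesis using \<open>0 < 1 - x^2\<close> by simp
  qed
  finally show ?thesis using assms by (intro amgm_two) auto
qed

lemma aux_ineq1:
  fixes q w :: real assumes "0 < q" "q \<le> 1" "0 \<le> w" "w < 1"
  shows "(1 + w) powr q - (1 - w) powr q \<ge> 2 * q * w"
proof -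
  let ?h = "\<lambda>x. (1 + x) powr q - (1 - x) powr q - 2 * q * x"
  have "?h 0 \<le> ?h w"
  proof (rule DERIV_nonneg_imp_increasing_open[of 0 w ?h])
    show "0 \<le> w" by fact
    fix x assume x: "0 < x" "x < w"
    have d: "(?h has_real_derivative (q * (1 + x) powr (q - 1) + q * (1 - x) powr (q - 1) - 2 * q)) (at x)"
      using x assms by (auto intro!: derivative_eq_intros)
    have "(1 + x) powr (q - 1) + (1 - x) powr (q - 1) \<ge> 2"
      using x assms by (intro aux_deriv1) auto
    hence "q * ((1 + x) powr (q - 1) + (1 - x) powr (q - 1)) \<ge> q * 2"
      using assms by (intro mult_left_mono) auto
    hence "q * (1 + x) powr (q - 1) + q * (1 - x) powr (q - 1) - 2 * q \<ge> 0"
      by (simp add: algebra_simps)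
    with d show "\<exists>y. (?h has_real_derivative y) (at x) \<and> 0 \<le> y" by blast
  next
    show "continuous_on {0..w} ?h" using assms
      by (intro continuous_intros) auto
  qed
  thus ?thesis by simp
qed

lemma twopt_core01:
  fixes p w :: real assumes "1 < p" "p \<le> 2" "0 \<le> w" "w \<le> 1"
  shows "(1 + (p - 1) * w^2) powr (p / 2) \<le> ((1 + w) powr p + (1 - w) powr p) / 2"
proof -
  let ?G = "\<lambda>x. ((1 + x) powr p + (1 - x) powr p) / 2 - (1 + (p - 1) * x^2) powr (p / 2)"
  have "?G 0 \<le> ?G w"
  proof (rule DERIV_nonneg_imp_increasing_open[of 0 w ?G])
    show "0 \<le> w" by fact
    fix x assume x: "0 < x" "x < w"
    have "0 \<le> (p - 1) * x^2" using assms by simp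
    hence pos: "1 + (p - 1) * x^2 > 0" by linarith
    have d: "(?G has_real_derivative
       ((p * (1 + x) powr (p - 1) + - (p * (1 - x) powr (p - 1))) / 2
        - (p / 2) * (1 + (p - 1) * x^2) powr (p / 2 - 1) * ((p - 1) * (2 * x)))) (at x)"
      using x assms pos by (intro DERIV_diff DERIV_cdivide DERIV_add d1 d2 d3) auto
    have i1: "(1 + x) powr (p - 1) - (1 - x) powr (p - 1) \<ge> 2 * (p - 1) * x"
      using x assms by (intro aux_ineq1) auto
    have i2: "(1 + (p - 1) * x^2) powr (p / 2 - 1) \<le> 1"
    proof -
      have "1 \<le> 1 + (p - 1) * x^2" using assms by simp
      moreover have "p / 2 - 1 \<le> 0" using assms by simp
      ultimately have "(1 + (p - 1) * x^2) powr (p / 2 - 1) \<le> (1 + (p - 1) * x^2) powr 0"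
        by (intro powr_mono) auto
      thus ?thesis using pos by simp
    qed
    have px: "0 \<le> (p - 1) * (2 * x)" using assms x by simp
    have "(p / 2) * (1 + (p - 1) * x^2) powr (p / 2 - 1) * ((p - 1) * (2 * x)) \<le> (p / 2) * ((p - 1) * (2 * x))"
      using i2 px assms by (intro mult_right_mono mult_left_mono) auto
    moreover have "(p / 2) * ((p - 1) * (2 * x)) \<le> (p * (1 + x) powr (p - 1) + - (p * (1 - x) powr (p - 1))) / 2"
    proof -
      have "p * (2 * (p - 1) * x) \<le> p * ((1 + x) powr (p - 1) - (1 - x) powr (p - 1))"
        using i1 assms by (intro mult_left_mono) auto
      thus ?thesis by (simp add: algebra_simps)
    qed
    ultimately have "0 \<le> ((p * (1 + x) powr (p - 1) + - (p * (1 - x) powr (p - 1))) / 2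
        - (p / 2) * (1 + (p - 1) * x^2) powr (p / 2 - 1) * ((p - 1) * (2 * x)))" by linarith
    with d show "\<exists>y. (?G has_real_derivative y) (at x) \<and> 0 \<le> y" by blast
  next
    have "\<forall>x\<in>{0..w}. 1 + (p - 1) * x^2 > 0"
    proof
      fix x :: real have "0 \<le> (p - 1) * x^2" using assms by simp
      thus "1 + (p - 1) * x^2 > 0" by linarith
    qed
    hence "continuous_on {0..w} (\<lambda>x. (1 + (p - 1) * x^2) powr (p / 2))"
      by (intro continuous_on_powr continuous_intros) auto
    moreover have "continuous_on {0..w} (\<lambda>x. (1 - x) powr p)" using assms by (intro c1) auto
    moreover have "continuous_on {0..w} (\<lambda>x. (1 + x) powr p)"
      by (intro continuous_on_powr continuous_intros) auto
    ultimately show "continuous_on {0..w} ?G"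
      by (intro continuous_on_diff continuous_on_divide continuous_on_add continuous_on_const) auto
  qed
  thus ?thesis by simp
qed


lemma twopt_scaled:
  fixes p A B :: real assumes p: "1 < p" "p \<le> 2" and AB: "0 < A" "0 \<le> B" "B \<le> A"
  shows "(A^2 + (p - 1) * B^2) powr (p / 2) \<le> ((A + B) powr p + (A - B) powr p) / 2"
proof -
  define w where "w = B / A"
  have w: "0 \<le> w" "w \<le> 1" using AB by (auto simp: w_def)
  have B: "B = A * w" using AB by (simp add: w_def)
  have e1: "A^2 + (p - 1) * B^2 = A^2 * (1 + (p - 1) * w^2)" by (simp add: B algebra_simps power2_eq_square)
  have "0 \<le> (p - 1) * w^2" using p by simp
  hence pos: "0 \<le> 1 + (p - 1) * w^2" by linarith
  have A2: "(A^2) powr (p / 2) = A powr p"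
  proof -
    have "A^2 = A powr 2" using AB by (simp add: powr_numeral)
    hence "(A^2) powr (p / 2) = A powr (2 * (p / 2))" by (simp add: powr_powr)
    thus ?thesis by simp
  qed
  have "(A^2 + (p - 1) * B^2) powr (p / 2) = A powr p * (1 + (p - 1) * w^2) powr (p / 2)"
    unfolding e1 using pos by (simp add: powr_mult A2)
  also have "\<dots> \<le> A powr p * (((1 + w) powr p + (1 - w) powr p) / 2)"
    using twopt_core01[OF p w] by (intro mult_left_mono) auto
  also have "\<dots> = ((A * (1 + w)) powr p + (A * (1 - w)) powr p) / 2"
  proof -
    have h1: "(A * (1 + w)) powr p = A powr p * (1 + w) powr p" using AB w by (simp add: powr_mult)
    have h2: "(A * (1 - w)) powr p = A powr p * (1 - w) powr p" using AB w by (simp add: powr_mult)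
    show ?thesis unfolding h1 h2 by (simp add: algebra_simps)
  qed
  also have "\<dots> = ((A + B) powr p + (A - B) powr p) / 2" by (simp add: B algebra_simps)
  finally show ?thesis .
qed

lemma twopoint:
  fixes p u v :: real assumes p: "1 < p" "p \<le> 2"
  shows "(u^2 + (p - 1) * v^2) powr (p / 2) \<le> (\<bar>u + v\<bar> powr p + \<bar>u - v\<bar> powr p) / 2"
proof -
  define A where "A = max \<bar>u\<bar> \<bar>v\<bar>"
  define B where "B = min \<bar>u\<bar> \<bar>v\<bar>"
  have AB: "0 \<le> B" "B \<le> A" by (auto simp: A_def B_def)
  have sums: "(\<bar>u + v\<bar> = A + B \<and> \<bar>u - v\<bar> = A - B) \<or> (\<bar>u + v\<bar> = A - B \<and> \<bar>u - v\<bar> = A + B)"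
    unfolding A_def B_def by (auto simp: max_def min_def abs_if)
  hence R: "\<bar>u + v\<bar> powr p + \<bar>u - v\<bar> powr p = (A + B) powr p + (A - B) powr p" by auto
  have sq: "u^2 + (p - 1) * v^2 \<le> A^2 + (p - 1) * B^2"
  proof (cases "\<bar>v\<bar> \<le> \<bar>u\<bar>")
    case True thus ?thesis by (simp add: A_def B_def max_def min_def)
  next
    case False
    hence "A = \<bar>v\<bar>" "B = \<bar>u\<bar>" by (auto simp: A_def B_def)
    hence "A^2 = v^2" "B^2 = u^2" by auto
    moreover have "u^2 \<le> v^2" using False by (simp add: abs_le_square_iff)
    moreover have "(2 - p) * u^2 \<le> (2 - p) * v^2" using p calculation by (intro mult_left_mono) auto
    ultimately show ?thesis by (simp add: algebra_simps)
  qed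
  show ?thesis
  proof (cases "A = 0")
    case True
    hence "u = 0" "v = 0" by (auto simp: A_def max_def split: if_splits)
    thus ?thesis by simp
  next
    case False
    hence "0 < A" using AB by linarith
    have "0 \<le> (p - 1) * v^2" using p by simp
    hence "0 \<le> u^2 + (p - 1) * v^2" by (smt (verit) zero_le_power2)
    hence "(u^2 + (p - 1) * v^2) powr (p / 2) \<le> (A^2 + (p - 1) * B^2) powr (p / 2)"
      using sq p by (intro powr_mono2) auto
    also have "\<dots> \<le> ((A + B) powr p + (A - B) powr p) / 2"
      using twopt_scaled[OF p \<open>0 < A\<close> AB] .
    finally show ?thesis using R by simp
  qed
qed




lemma powr_convex0:
  fixes p a b t :: real
  assumes "1 \<le> p" "0 \<le> a" "0 \<le> b" "0 \<le> t" "t \<le> 1"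
  shows "(t * a + (1 - t) * b) powr p \<le> t * a powr p + (1 - t) * b powr p"
proof -
  have small: "x powr p \<le> x" if "0 \<le> x" "x \<le> 1" for x :: real
  proof (cases "x = 0")
    case False
    hence "x powr p \<le> x powr 1" using that assms by (intro powr_mono') auto
    thus ?thesis using that False by simp
  qed (use assms in simp)
  consider "a = 0" | "b = 0" | "0 < a" "0 < b" using assms by linarith
  thus ?thesis
  proof cases
    case 1
    have "((1 - t) * b) powr p = (1 - t) powr p * b powr p" using assms by (simp add: powr_mult)
    also have "\<dots> \<le> (1 - t) * b powr p" using small[of "1 - t"] assms by (intro mult_right_mono) auto
    finally show ?thesis using 1 by simp
  next
    case 2
    have "(t * a) powr p = t powr p * a powr p" using assms by (simp add: powr_mult)
    also have "\<dots> \<le> t * a powr p" using small[of t] assms by (intro mult_right_mono) auto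
    finally show ?thesis using 2 by simp
  next
    case 3
    have "convex_on {0<..} (\<lambda>x::real. x powr p)" using assms by (intro powr_convex)
    from convex_onD[OF this, of t b a] 3 assms
    show ?thesis by (simp add: algebra_simps)
  qed
qed

lemma convex_abs_powr:
  fixes p :: real assumes "1 \<le> p"
  shows "convex_on UNIV (\<lambda>x::real. \<bar>x\<bar> powr p)"
proof (rule convex_onI)
  fix t x y :: real assume t: "0 < t" "t < 1"
  have "\<bar>(1 - t) * x + t * y\<bar> \<le> (1 - t) * \<bar>x\<bar> + t * \<bar>y\<bar>"
  proof -
    have "\<bar>(1 - t) * x + t * y\<bar> \<le> \<bar>(1 - t) * x\<bar> + \<bar>t * y\<bar>" by (rule abs_triangle_ineq)
    also have "\<dots> = (1 - t) * \<bar>x\<bar> + t * \<bar>y\<bar>" using t by (simp add: abs_mult)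
    finally show ?thesis .
  qed
  hence "\<bar>(1 - t) * x + t * y\<bar> powr p \<le> ((1 - t) * \<bar>x\<bar> + t * \<bar>y\<bar>) powr p"
    using assms by (intro powr_mono2) auto
  also have "\<dots> \<le> (1 - t) * \<bar>x\<bar> powr p + t * \<bar>y\<bar> powr p"
    using powr_convex0[OF assms, of "\<bar>x\<bar>" "\<bar>y\<bar>" "1 - t"] t by simp
  finally show "\<bar>(1 - t) *\<^sub>R x + t *\<^sub>R y\<bar> powr p \<le> (1 - t) * \<bar>x\<bar> powr p + t * \<bar>y\<bar> powr p"
    by simp
qed auto

lemma powr_mean_convex:
  fixes r A B :: real assumes "1 \<le> r" "0 \<le> A" "0 \<le> B"
  shows "((A + B) / 2) powr r \<le> (A powr r + B powr r) / 2"
  using powr_convex0[OF assms, of "1/2"] by (simp add: field_simps)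

lemma concave_powr:
  fixes q :: real assumes "0 < q" "q \<le> 1"
  shows "concave_on {0<..} (\<lambda>x::real. x powr q)"
proof (rule f''_le0_imp_concave[where f' = "\<lambda>x. q * x powr (q - 1)" and f'' = "\<lambda>x. q * ((q - 1) * x powr (q - 1 - 1))"])
  fix x :: real assume x: "x \<in> {0<..}"
  show "((\<lambda>x. x powr q) has_real_derivative q * x powr (q - 1)) (at x)"
    using x by (auto intro!: derivative_eq_intros)
  show "((\<lambda>x. q * x powr (q - 1)) has_real_derivative q * ((q - 1) * x powr (q - 1 - 1))) (at x)"
    using x by (auto intro!: derivative_eq_intros)
  show "q * ((q - 1) * x powr (q - 1 - 1)) \<le> 0"
    using assms x by (intro mult_nonneg_nonpos mult_nonpos_nonneg) auto
qed auto

lemma rev_mink_pt: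
  fixes q l a b :: real assumes q: "0 < q" "q \<le> 1" and l: "0 < l" "l < 1" and ab: "0 \<le> a" "0 \<le> b"
  shows "l powr (1 - q) * a powr q + (1 - l) powr (1 - q) * b powr q \<le> (a + b) powr q"
proof -
  have le1: "x powr (1 - q) \<le> 1" if "0 < x" "x \<le> 1" for x :: real
  proof -
    have "x powr (1 - q) \<le> x powr 0" using that q by (intro powr_mono') auto
    thus ?thesis using that by simp
  qed
  consider "a = 0" | "b = 0" | "0 < a" "0 < b" using ab by linarith
  thus ?thesis
  proof cases
    case 1
    have "(1 - l) powr (1 - q) * b powr q \<le> 1 * b powr q" using le1[of "1 - l"] l by (intro mult_right_mono) auto
    thus ?thesis using 1 q by simp
  next
    case 2
    have "l powr (1 - q) * a powr q \<le> 1 * a powr q" using le1[of l] l by (intro mult_right_mono) auto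
    thus ?thesis using 2 q by simp
  next
    case 3
    have e1: "l * (a / l) powr q = l powr (1 - q) * a powr q"
      using l 3 by (simp add: powr_divide powr_diff)
    have e2: "(1 - l) * (b / (1 - l)) powr q = (1 - l) powr (1 - q) * b powr q"
      using l 3 by (simp add: powr_divide powr_diff)
    have "l * (a / l) powr q + (1 - l) * (b / (1 - l)) powr q \<le> (l * (a / l) + (1 - l) * (b / (1 - l))) powr q"
      using concave_onD[OF concave_powr[OF q], of "1 - l" "a / l" "b / (1 - l)"] l 3
      by simp
    also have "l * (a / l) + (1 - l) * (b / (1 - l)) = a + b" using l by simp
    finally show ?thesis using e1 e2 by simp
  qed
qed




definition Np :: "'a measure \<Rightarrow> real \<Rightarrow> ('a \<Rightarrow> real) \<Rightarrow> real" where
  "Np M p g = (\<integral>x. \<bar>g x\<bar> powr p \<partial>M)"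

lemma Np_nonneg: "0 \<le> Np M p g"
  unfolding Np_def by (intro integral_nonneg_AE) auto

lemma Lp_norm_Np: "Lp_norm M p g = Np M p g powr (1 / p)"
  by (simp add: Lp_norm_def Np_def)

lemma sq_powr: fixes x p :: real shows "(x^2) powr (p / 2) = \<bar>x\<bar> powr p"
proof (cases "x = 0")
  case False
  have e: "\<bar>x\<bar> powr 2 = x^2" using False by (simp add: powr_numeral)
  have "(x^2) powr (p / 2) = (\<bar>x\<bar> powr 2) powr (p / 2)" by (simp only: e)
  also have "\<dots> = \<bar>x\<bar> powr (2 * (p / 2))" by (rule powr_powr)
  finally have "(x^2) powr (p / 2) = \<bar>x\<bar> powr (2 * (p / 2))" .
  thus ?thesis by simp
qed simp

lemma abs_add_powr_le:
  fixes s t p :: real assumes "0 \<le> p"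
  shows "\<bar>s + t\<bar> powr p \<le> 2 powr p * (\<bar>s\<bar> powr p + \<bar>t\<bar> powr p)"
proof -
  have "\<bar>s + t\<bar> \<le> 2 * max \<bar>s\<bar> \<bar>t\<bar>" using abs_triangle_ineq[of s t] by (auto simp: max_def)
  hence "\<bar>s + t\<bar> powr p \<le> (2 * max \<bar>s\<bar> \<bar>t\<bar>) powr p" using assms by (intro powr_mono2) auto
  also have "\<dots> = 2 powr p * (max \<bar>s\<bar> \<bar>t\<bar>) powr p" by (simp add: powr_mult)
  also have "\<dots> \<le> 2 powr p * (\<bar>s\<bar> powr p + \<bar>t\<bar> powr p)"
    by (intro mult_left_mono) (auto simp: max_def)
  finally show ?thesis .
qed

lemma in_Lp_meas: "in_Lp M p f \<Longrightarrow> f \<in> borel_measurable M"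
  by (simp add: in_Lp_def)

lemma in_Lp_int: "in_Lp M p f \<Longrightarrow> integrable M (\<lambda>x. \<bar>f x\<bar> powr p)"
  by (simp add: in_Lp_def)

lemma in_Lp_add:
  assumes "in_Lp M p f" "in_Lp M p g" "0 \<le> p"
  shows "in_Lp M p (\<lambda>x. f x + g x)"
proof -
  have [measurable]: "f \<in> borel_measurable M" "g \<in> borel_measurable M" using assms by (auto simp: in_Lp_def)
  have "integrable M (\<lambda>x. 2 powr p * (\<bar>f x\<bar> powr p + \<bar>g x\<bar> powr p))"
    using assms by (auto simp: in_Lp_def)
  hence "integrable M (\<lambda>x. \<bar>f x + g x\<bar> powr p)"
    by (rule Bochner_Integration.integrable_bound) (use abs_add_powr_le[OF assms(3)] in auto)
  thus ?thesis by (simp add: in_Lp_def)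
qed

lemma in_Lp_cmult:
  assumes "in_Lp M p f"
  shows "in_Lp M p (\<lambda>x. c * f x)"
proof -
  have [measurable]: "f \<in> borel_measurable M" using assms by (auto simp: in_Lp_def)
  have "integrable M (\<lambda>x. \<bar>c\<bar> powr p * \<bar>f x\<bar> powr p)"
    using assms by (auto simp: in_Lp_def)
  thus ?thesis by (simp add: in_Lp_def abs_mult powr_mult)
qed

lemma in_Lp_lin:
  assumes "in_Lp M p f" "in_Lp M p g" "0 \<le> p"
  shows "in_Lp M p (\<lambda>x. a * f x + b * g x)"
  using in_Lp_add[OF in_Lp_cmult[OF assms(1)] in_Lp_cmult[OF assms(2)] assms(3)] .

lemma in_Lp_diff:
  assumes "in_Lp M p f" "in_Lp M p g" "0 \<le> p"
  shows "in_Lp M p (\<lambda>x. f x - g x)"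
  using in_Lp_lin[OF assms, of 1 "-1"] by simp

lemma Np_cmult: "Np M p (\<lambda>x. c * f x) = \<bar>c\<bar> powr p * Np M p f"
  by (simp add: Np_def abs_mult powr_mult)

context prob_space
begin

lemma in_Lp_integrable:
  assumes "in_Lp M p f" "1 \<le> p"
  shows "integrable M f"
proof -
  have [measurable]: "f \<in> borel_measurable M" using assms by (auto simp: in_Lp_def)
  have I: "integrable M (\<lambda>x. 1 + \<bar>f x\<bar> powr p)"
    using assms by (auto simp: in_Lp_def)
  have B: "\<bar>y\<bar> \<le> 1 + \<bar>y\<bar> powr p" for y :: real
  proof (cases "\<bar>y\<bar> \<le> 1")
    case True thus ?thesis by (smt (verit) powr_ge_zero)
  next
    case False
    hence "\<bar>y\<bar> powr 1 \<le> \<bar>y\<bar> powr p" using assms by (intro powr_mono) auto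
    thus ?thesis using False by simp
  qed
  show ?thesis
    by (rule Bochner_Integration.integrable_bound[OF I]) (use B in auto)
qed

lemma abs_set_integral_le_Lp:
  assumes S: "S \<in> sets M" and g: "in_Lp M p g" and p: "1 \<le> p"
  shows "\<bar>set_lebesgue_integral M S g\<bar> \<le> Np M p g powr (1 / p)"
proof -
  have [measurable]: "g \<in> borel_measurable M" using g by (auto simp: in_Lp_def)
  have [measurable]: "S \<in> sets M" using S .
  let ?X = "\<lambda>x. indicator S x * g x"
  have iX: "integrable M ?X" using integrable_mult_indicator[OF S in_Lp_integrable[OF g p]] by simp
  have bnd: "\<bar>?X x\<bar> powr p \<le> \<bar>g x\<bar> powr p" for x
    by (auto simp: indicator_def)
  have iqX: "integrable M (\<lambda>x. \<bar>?X x\<bar> powr p)"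
    by (rule Bochner_Integration.integrable_bound[OF in_Lp_int[OF g]]) (use bnd in auto)
  have "\<bar>expectation ?X\<bar> powr p \<le> expectation (\<lambda>x. \<bar>?X x\<bar> powr p)"
    by (rule jensens_inequality[where I = UNIV and q = "\<lambda>x. \<bar>x\<bar> powr p"])
       (use iX iqX convex_abs_powr[OF p] in auto)
  also have "\<dots> \<le> Np M p g" unfolding Np_def
    by (rule integral_mono[OF iqX in_Lp_int[OF g]]) (use bnd in auto)
  finally have "(\<bar>expectation ?X\<bar> powr p) powr (1 / p) \<le> Np M p g powr (1 / p)"
    using p by (intro powr_mono2) auto
  moreover have "(\<bar>expectation ?X\<bar> powr p) powr (1 / p) = \<bar>expectation ?X\<bar>"
    using p by (simp add: powr_powr)
  moreover have "set_lebesgue_integral M S g = expectation ?X"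
    by (simp add: set_lebesgue_integral_def)
  ultimately show ?thesis by simp
qed

end




lemma midpoint_lemma:
  fixes \<phi> :: "real \<Rightarrow> real" and c :: real
  assumes c: "0 \<le> c"
    and lb: "\<And>t. 0 \<le> t \<Longrightarrow> t \<le> 1 \<Longrightarrow> \<phi> 0 \<le> \<phi> t"
    and mid: "\<And>h. 0 < h \<Longrightarrow> h \<le> 1 \<Longrightarrow> 2 * \<phi> (h / 2) + 2 * c * (h / 2)^2 \<le> \<phi> 0 + \<phi> h"
  shows "\<phi> 0 + c \<le> \<phi> 1"
proof -
  define \<psi> where "\<psi> t = \<phi> t - c * t^2" for t
  define D where "D = \<psi> 1 - \<psi> 0"
  have ind: "\<psi> (1 / 2^n) \<le> \<psi> 0 + D / 2^n" for n :: nat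
  proof (induction n)
    case 0 thus ?case by (simp add: D_def)
  next
    case (Suc n)
    define h :: real where "h = 1 / 2^n"
    have h: "0 < h" "h \<le> 1" by (auto simp: h_def)
    have "2 * \<phi> (h / 2) + 2 * c * (h / 2)^2 \<le> \<phi> 0 + \<phi> h" using mid[OF h] .
    hence "\<psi> (h / 2) \<le> (\<psi> 0 + \<psi> h) / 2"
      by (simp add: \<psi>_def power2_eq_square field_simps)
    also have "(\<psi> 0 + \<psi> h) / 2 \<le> (\<psi> 0 + (\<psi> 0 + D * h)) / 2"
    proof -
      have "\<psi> h \<le> \<psi> 0 + D * h" using Suc.IH by (simp add: h_def)
      thus ?thesis by simp
    qed
    also have "\<dots> = \<psi> 0 + D * (h / 2)" by (simp add: field_simps)
    finally have "\<psi> (h / 2) \<le> \<psi> 0 + D * (h / 2)" .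
    thus ?case by (simp add: h_def mult.commute)
  qed
  have low: "- c / 2^n \<le> D" for n :: nat
  proof -
    define h :: real where "h = 1 / 2^n"
    have h: "0 < h" "h \<le> 1" by (auto simp: h_def)
    have "\<phi> 0 \<le> \<phi> h" using lb h by auto
    hence "\<psi> 0 - c * h^2 \<le> \<psi> h" by (simp add: \<psi>_def)
    also have "\<psi> h \<le> \<psi> 0 + D * h" using ind[of n] by (simp add: h_def)
    finally have "- c * h * h \<le> D * h" by (simp add: power2_eq_square)
    hence "(- c * h) * h \<le> D * h" by simp
    from mult_right_le_imp_le[OF this h(1)] have "- c * h \<le> D" .
    thus ?thesis by (simp add: h_def)
  qed
  have "0 \<le> D"
  proof (rule ccontr)
    assume "\<not> 0 \<le> D"
    hence D: "D < 0" by simp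
    show False
    proof (cases "c = 0")
      case True thus False using low[of 0] D by simp
    next
      case False
      hence cpos: "0 < c" using c by simp
      have "0 < - D / c" using D cpos by (simp add: divide_neg_pos)
      from real_arch_pow_inv[OF this, of "1/2"]
      obtain n :: nat where n: "(1/2::real)^n < - D / c" by auto
      have "c * (1/2)^n < - D" using n cpos by (simp add: field_simps)
      moreover have "- c / 2^n \<le> D" by (rule low)
      ultimately show False by (simp add: field_simps)
    qed
  qed
  thus ?thesis by (simp add: D_def \<psi>_def)
qed

context prob_space
begin

lemma rev_mink:
  fixes F G :: "'a \<Rightarrow> real" and q :: real
  assumes q: "0 < q" "q \<le> 1"
    and nn: "\<And>x. 0 \<le> F x" "\<And>x. 0 \<le> G x"
    and iF: "integrable M (\<lambda>x. F x powr q)" and iG: "integrable M (\<lambda>x. G x powr q)"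
    and iFG: "integrable M (\<lambda>x. (F x + G x) powr q)"
  shows "(\<integral>x. F x powr q \<partial>M) powr (1 / q) + (\<integral>x. G x powr q \<partial>M) powr (1 / q)
           \<le> (\<integral>x. (F x + G x) powr q \<partial>M) powr (1 / q)"
proof -
  define IF where "IF = (\<integral>x. F x powr q \<partial>M)"
  define IG where "IG = (\<integral>x. G x powr q \<partial>M)"
  define IFG where "IFG = (\<integral>x. (F x + G x) powr q \<partial>M)"
  have IF0: "0 \<le> IF" unfolding IF_def by (intro integral_nonneg_AE) auto
  have IG0: "0 \<le> IG" unfolding IG_def by (intro integral_nonneg_AE) auto
  have m1: "IF \<le> IFG" unfolding IF_def IFG_def
    by (rule integral_mono[OF iF iFG]) (use nn q in \<open>auto intro!: powr_mono2\<close>)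
  have m2: "IG \<le> IFG" unfolding IG_def IFG_def
    by (rule integral_mono[OF iG iFG]) (use nn q in \<open>auto intro!: powr_mono2\<close>)
  define a0 where "a0 = IF powr (1 / q)"
  define b0 where "b0 = IG powr (1 / q)"
  have a0q: "a0 powr q = IF" using IF0 q by (simp add: a0_def powr_powr)
  have b0q: "b0 powr q = IG" using IG0 q by (simp add: b0_def powr_powr)
  have "a0 + b0 \<le> IFG powr (1 / q)"
  proof (cases "IF = 0 \<or> IG = 0")
    case True
    thus ?thesis
    proof
      assume "IF = 0"
      thus ?thesis using m2 IG0 q by (simp add: powr_mono2 a0_def b0_def)
    next
      assume "IG = 0"
      thus ?thesis using m1 IF0 q by (simp add: powr_mono2 a0_def b0_def)
    qed
  next
    case False
    hence pos: "0 < IF" "0 < IG" using IF0 IG0 by auto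
    hence a0p: "0 < a0" "0 < b0" by (auto simp: a0_def b0_def)
    define S where "S = a0 + b0"
    define l where "l = a0 / S"
    have Sp: "0 < S" using a0p by (simp add: S_def)
    have l: "0 < l" "l < 1" using a0p by (auto simp: l_def S_def field_simps)
    have a0S: "a0 = l * S" and b0S: "b0 = (1 - l) * S" using Sp by (auto simp: l_def S_def field_simps)
    have "(\<integral>x. l powr (1 - q) * F x powr q + (1 - l) powr (1 - q) * G x powr q \<partial>M) \<le> IFG"
      unfolding IFG_def
      by (rule integral_mono) (use iF iG iFG rev_mink_pt[OF q l] nn in auto)
    hence "l powr (1 - q) * IF + (1 - l) powr (1 - q) * IG \<le> IFG"
      using iF iG by (simp add: IF_def IG_def)
    moreover have "l powr (1 - q) * IF = l * S powr q"
    proof -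
      have "l powr (1 - q) * IF = l powr (1 - q) * (l powr q * S powr q)"
        using a0q a0S l Sp by (simp add: powr_mult)
      also have "\<dots> = (l powr (1 - q) * l powr q) * S powr q" by simp
      also have "l powr (1 - q) * l powr q = l" using l by (simp add: powr_add[symmetric])
      finally show ?thesis .
    qed
    moreover have "(1 - l) powr (1 - q) * IG = (1 - l) * S powr q"
    proof -
      have "(1 - l) powr (1 - q) * IG = (1 - l) powr (1 - q) * ((1 - l) powr q * S powr q)"
        using b0q b0S l Sp by (simp add: powr_mult)
      also have "\<dots> = ((1 - l) powr (1 - q) * (1 - l) powr q) * S powr q" by simp
      also have "(1 - l) powr (1 - q) * (1 - l) powr q = 1 - l" using l by (simp add: powr_add[symmetric])
      finally show ?thesis .
    qed
    ultimately have "S powr q \<le> IFG" by (simp add: algebra_simps)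
    hence "(S powr q) powr (1 / q) \<le> IFG powr (1 / q)" using Sp q by (intro powr_mono2) auto
    hence "S \<le> IFG powr (1 / q)" using Sp q by (simp add: powr_powr)
    thus ?thesis by (simp add: S_def)
  qed
  thus ?thesis by (simp add: a0_def b0_def IF_def IG_def IFG_def)
qed

end




context prob_space
begin

lemma bcl:
  fixes p :: real and x y :: "'a \<Rightarrow> real"
  assumes p: "1 < p" "p \<le> 2" and x: "in_Lp M p x" and y: "in_Lp M p y"
  shows "2 * Np M p x powr (2 / p) + 2 * (p - 1) * Np M p y powr (2 / p)
          \<le> Np M p (\<lambda>z. x z + y z) powr (2 / p) + Np M p (\<lambda>z. x z - y z) powr (2 / p)"
proof -
  have [measurable]: "x \<in> borel_measurable M" "y \<in> borel_measurable M" using x y by (auto simp: in_Lp_def)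
  define q where "q = p / 2"
  have q: "0 < q" "q \<le> 1" using p by (auto simp: q_def)
  have rq: "1 / q = 2 / p" by (simp add: q_def)
  define F where "F z = (x z)^2" for z
  define G where "G z = (p - 1) * (y z)^2" for z
  have nn: "\<And>z. 0 \<le> F z" "\<And>z. 0 \<le> G z" using p by (auto simp: F_def G_def)
  have Fq: "F z powr q = \<bar>x z\<bar> powr p" for z by (simp add: F_def q_def sq_powr)
  have Gq: "G z powr q = (p - 1) powr q * \<bar>y z\<bar> powr p" for z
    using p by (simp add: G_def q_def sq_powr powr_mult)
  have ixy: "in_Lp M p (\<lambda>z. x z + y z)" "in_Lp M p (\<lambda>z. x z - y z)"
    using p by (auto intro!: in_Lp_add in_Lp_diff x y)
  have tp: "(F z + G z) powr q \<le> (\<bar>x z + y z\<bar> powr p + \<bar>x z - y z\<bar> powr p) / 2" for z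
    using twopoint[OF p, of "x z" "y z"] by (simp add: F_def G_def q_def)
  have iF: "integrable M (\<lambda>z. F z powr q)" unfolding Fq using in_Lp_int[OF x] .
  have iG: "integrable M (\<lambda>z. G z powr q)" unfolding Gq using in_Lp_int[OF y] by simp
  have iS: "integrable M (\<lambda>z. (\<bar>x z + y z\<bar> powr p + \<bar>x z - y z\<bar> powr p) / 2)"
    using in_Lp_int[OF ixy(1)] in_Lp_int[OF ixy(2)] by simp
  have iFG: "integrable M (\<lambda>z. (F z + G z) powr q)"
    by (rule Bochner_Integration.integrable_bound[OF iS])
       (use tp nn in \<open>auto simp: F_def G_def\<close>)
  have RM: "(\<integral>z. F z powr q \<partial>M) powr (1 / q) + (\<integral>z. G z powr q \<partial>M) powr (1 / q)
           \<le> (\<integral>z. (F z + G z) powr q \<partial>M) powr (1 / q)"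
    by (rule rev_mink[OF q nn iF iG iFG])
  have e1: "(\<integral>z. F z powr q \<partial>M) = Np M p x" unfolding Fq Np_def ..
  have e2: "(\<integral>z. G z powr q \<partial>M) = (p - 1) powr q * Np M p y" unfolding Gq Np_def by simp
  have e2': "((p - 1) powr q * Np M p y) powr (2 / p) = (p - 1) * Np M p y powr (2 / p)"
  proof -
    have "((p - 1) powr q * Np M p y) powr (2 / p) = ((p - 1) powr q) powr (2 / p) * Np M p y powr (2 / p)"
      using p Np_nonneg by (simp add: powr_mult)
    also have "((p - 1) powr q) powr (2 / p) = (p - 1) powr (q * (2 / p))" by (rule powr_powr)
    also have "q * (2 / p) = 1" using p by (simp add: q_def)
    finally show ?thesis using p by simp
  qed
  define N1 where "N1 = Np M p (\<lambda>z. x z + y z)"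
  define N2 where "N2 = Np M p (\<lambda>z. x z - y z)"
  have "(\<integral>z. (F z + G z) powr q \<partial>M) \<le> (\<integral>z. (\<bar>x z + y z\<bar> powr p + \<bar>x z - y z\<bar> powr p) / 2 \<partial>M)"
    by (rule integral_mono[OF iFG iS]) (use tp in auto)
  also have "\<dots> = (N1 + N2) / 2"
    using in_Lp_int[OF ixy(1)] in_Lp_int[OF ixy(2)] by (simp add: N1_def N2_def Np_def)
  finally have le1: "(\<integral>z. (F z + G z) powr q \<partial>M) \<le> (N1 + N2) / 2" .
  have i0: "0 \<le> (\<integral>z. (F z + G z) powr q \<partial>M)" by (intro integral_nonneg_AE) auto
  have "Np M p x powr (2 / p) + (p - 1) * Np M p y powr (2 / p) \<le> (\<integral>z. (F z + G z) powr q \<partial>M) powr (2 / p)"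
    using RM unfolding e1 e2 rq e2' .
  also have "\<dots> \<le> ((N1 + N2) / 2) powr (2 / p)" using le1 i0 p by (intro powr_mono2) auto
  also have "\<dots> \<le> (N1 powr (2 / p) + N2 powr (2 / p)) / 2"
    using p by (intro powr_mean_convex) (auto simp: N1_def N2_def Np_nonneg)
  finally have X: "Np M p x powr (2 / p) + (p - 1) * Np M p y powr (2 / p) \<le> (N1 powr (2 / p) + N2 powr (2 / p)) / 2" .
  have gen: "A + c * B \<le> (C + D) / 2 \<Longrightarrow> 2 * A + 2 * c * B \<le> C + D" for A B C D c :: real
    by (simp add: field_simps)
  from gen[OF X] show ?thesis unfolding N1_def N2_def .
qed

lemma ricard_xu:
  fixes p :: real and a b :: "'a \<Rightarrow> real"
  assumes p: "1 < p" "p \<le> 2" and a: "in_Lp M p a" and b: "in_Lp M p b"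
    and contr: "\<And>t. 0 \<le> t \<Longrightarrow> t \<le> 1 \<Longrightarrow> Np M p a \<le> Np M p (\<lambda>z. a z + t * b z)"
  shows "Np M p a powr (2 / p) + (p - 1) * Np M p b powr (2 / p) \<le> Np M p (\<lambda>z. a z + b z) powr (2 / p)"
proof -
  define \<phi> where "\<phi> t = Np M p (\<lambda>z. a z + t * b z) powr (2 / p)" for t
  have \<phi>0: "\<phi> 0 = Np M p a powr (2 / p)" by (simp add: \<phi>_def)
  have \<phi>1: "\<phi> 1 = Np M p (\<lambda>z. a z + b z) powr (2 / p)" by (simp add: \<phi>_def)
  have "\<phi> 0 + (p - 1) * Np M p b powr (2 / p) \<le> \<phi> 1"
  proof (rule midpoint_lemma)
    show "0 \<le> (p - 1) * Np M p b powr (2 / p)" using p by simp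
  next
    fix t :: real assume "0 \<le> t" "t \<le> 1"
    thus "\<phi> 0 \<le> \<phi> t" unfolding \<phi>0 \<phi>_def using contr p Np_nonneg by (intro powr_mono2) auto
  next
    fix h :: real assume h: "0 < h" "h \<le> 1"
    define x where "x z = a z + (h / 2) * b z" for z
    define y where "y z = (h / 2) * b z" for z
    have x: "in_Lp M p x" unfolding x_def using p by (intro in_Lp_add in_Lp_cmult a b) auto
    have y: "in_Lp M p y" unfolding y_def by (intro in_Lp_cmult b)
    have B: "2 * Np M p x powr (2 / p) + 2 * (p - 1) * Np M p y powr (2 / p)
          \<le> Np M p (\<lambda>z. x z + y z) powr (2 / p) + Np M p (\<lambda>z. x z - y z) powr (2 / p)"
      by (rule bcl[OF p x y])
    have "(\<lambda>z. x z + y z) = (\<lambda>z. a z + h * b z)" by (auto simp: x_def y_def field_simps)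
    hence s1: "Np M p (\<lambda>z. x z + y z) powr (2 / p) = \<phi> h" by (simp add: \<phi>_def)
    have "(\<lambda>z. x z - y z) = a" by (auto simp: x_def y_def)
    hence s2: "Np M p (\<lambda>z. x z - y z) powr (2 / p) = \<phi> 0" by (simp add: \<phi>0)
    have s3: "Np M p x powr (2 / p) = \<phi> (h / 2)" unfolding \<phi>_def
      by (rule arg_cong[where f = "\<lambda>g. Np M p g powr (2 / p)"]) (simp add: fun_eq_iff x_def)
    have "Np M p y = \<bar>h / 2\<bar> powr p * Np M p b" unfolding y_def by (rule Np_cmult)
    hence "Np M p y powr (2 / p) = (\<bar>h / 2\<bar> powr p) powr (2 / p) * Np M p b powr (2 / p)"
      using Np_nonneg by (simp add: powr_mult)
    also have "(\<bar>h / 2\<bar> powr p) powr (2 / p) = (h / 2)^2"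
    proof -
      have "(\<bar>h / 2\<bar> powr p) powr (2 / p) = \<bar>h / 2\<bar> powr 2" using p by (simp add: powr_powr)
      also have "\<dots> = (h / 2)^2" using h by (simp add: powr_numeral)
      finally show ?thesis .
    qed
    finally have s4: "Np M p y powr (2 / p) = (h / 2)^2 * Np M p b powr (2 / p)" .
    show "2 * \<phi> (h / 2) + 2 * ((p - 1) * Np M p b powr (2 / p)) * (h / 2)^2 \<le> \<phi> 0 + \<phi> h"
      using B unfolding s1 s2 s3 s4 by (simp add: algebra_simps)
  qed
  thus ?thesis unfolding \<phi>0 \<phi>1 .
qed

end




lemma part_space: "space (part_algebra M Q) = space M"
  by (simp add: part_algebra_def space_measure_of_conv)

lemma part_sets: "Q \<subseteq> Pow (space M) \<Longrightarrow> sets (part_algebra M Q) = sigma_sets (space M) Q"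
  by (simp add: part_algebra_def sets_measure_of_conv)

lemma part_subalg:
  assumes "Q \<subseteq> sets M"
  shows "subalgebra M (part_algebra M Q)"
proof -
  have "Q \<subseteq> Pow (space M)" using assms sets.sets_into_space by blast
  hence "sets (part_algebra M Q) = sigma_sets (space M) Q" by (rule part_sets)
  also have "\<dots> \<subseteq> sets M" using assms by (rule sets.sigma_sets_subset)
  finally show ?thesis by (simp add: subalgebra_def part_space)
qed

lemma part_sfs:
  assumes "prob_space M" "Q \<subseteq> sets M"
  shows "sigma_finite_subalgebra M (part_algebra M Q)"
proof -
  interpret prob_space M by fact
  have "finite_measure_subalgebra M (part_algebra M Q)"
    using part_subalg[OF assms(2)] by unfold_locales
  thus ?thesis by (rule finite_measure_subalgebra_is_sigma_finite)
qed

lemma union_in_part: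
  assumes "finite Q" "Q \<subseteq> Pow (space M)" "X \<subseteq> Q"
  shows "\<Union>X \<in> sets (part_algebra M Q)"
proof -
  have "X \<subseteq> sets (part_algebra M Q)" using assms part_sets[OF assms(2)] by auto
  moreover have "finite X" using assms finite_subset by blast
  ultimately show ?thesis by (intro sets.finite_Union)
qed

lemma cell_union:
  assumes P: "finite_partition \<Omega> P" and Q: "finite_partition \<Omega> Q" and r: "refines Q P" and A: "A \<in> P"
  shows "A = \<Union>{B\<in>Q. B \<subseteq> A}"
proof
  show "\<Union>{B\<in>Q. B \<subseteq> A} \<subseteq> A" by auto
  show "A \<subseteq> \<Union>{B\<in>Q. B \<subseteq> A}"
  proof
    fix x assume x: "x \<in> A"
    have "A \<subseteq> \<Omega>" using P A by (auto simp: finite_partition_def partition_on_def)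
    hence "x \<in> \<Union>Q" using Q x by (auto simp: finite_partition_def partition_on_def)
    then obtain B where B: "B \<in> Q" "x \<in> B" by auto
    obtain A' where A': "A' \<in> P" "B \<subseteq> A'" using r B by (auto simp: refines_def)
    have "A = A'"
    proof (rule ccontr)
      assume "A \<noteq> A'"
      hence "disjnt A A'" using P A A'(1) by (auto simp: finite_partition_def partition_on_def pairwise_def)
      thus False using x B A' by (auto simp: disjnt_def)
    qed
    thus "x \<in> \<Union>{B\<in>Q. B \<subseteq> A}" using B A' by auto
  qed
qed

lemma refine_subalg:
  assumes P: "finite_partition (space M) P" and Q: "finite_partition (space M) Q" and r: "refines Q P"
  shows "subalgebra (part_algebra M Q) (part_algebra M P)"
proof -
  have QP: "Q \<subseteq> Pow (space M)" using Q by (auto simp: finite_partition_def partition_on_def)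
  have PP: "P \<subseteq> Pow (space M)" using P by (auto simp: finite_partition_def partition_on_def)
  have "P \<subseteq> sigma_sets (space M) Q"
  proof
    fix A assume A: "A \<in> P"
    have "A = \<Union>{B\<in>Q. B \<subseteq> A}" by (rule cell_union[OF P Q r A])
    also have "\<dots> \<in> sets (part_algebra M Q)"
      using Q QP by (intro union_in_part) (auto simp: finite_partition_def)
    finally show "A \<in> sigma_sets (space M) Q" using part_sets[OF QP] by simp
  qed
  hence "sigma_sets (space M) P \<subseteq> sigma_sets (space M) Q" by (rule sigma_sets_mono)
  thus ?thesis by (simp add: subalgebra_def part_space part_sets[OF QP] part_sets[OF PP])
qed

context sigma_finite_subalgebra
begin

lemma ce_in_Lp:
  assumes "prob_space M" "in_Lp M p f" "1 \<le> p"
  shows "in_Lp M p (real_cond_exp M F f)"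
proof -
  interpret prob_space M by fact
  have fi: "integrable M f" using in_Lp_integrable assms(2,3) by blast
  have qm: "(\<lambda>x::real. \<bar>x\<bar> powr p) \<in> borel_measurable borel" by measurable
  have cv: "convex_on UNIV (\<lambda>x::real. \<bar>x\<bar> powr p)" using convex_abs_powr assms(3) by blast
  have iq: "integrable M (\<lambda>x. \<bar>f x\<bar> powr p)" using assms(2) by (simp add: in_Lp_def)
  have "integrable M (\<lambda>x. \<bar>real_cond_exp M F f x\<bar> powr p)"
    by (rule integrable_convex_cond_exp[where I = UNIV and q = "\<lambda>x. \<bar>x\<bar> powr p", OF fi _ _ iq cv qm]) auto
  thus ?thesis by (simp add: in_Lp_def)
qed

lemma ce_contr:
  assumes "prob_space M" "in_Lp M p f" "1 \<le> p"
  shows "Np M p (real_cond_exp M F f) \<le> Np M p f"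
proof -
  interpret prob_space M by fact
  have fi: "integrable M f" using in_Lp_integrable assms(2,3) by blast
  have qm: "(\<lambda>x::real. \<bar>x\<bar> powr p) \<in> borel_measurable borel" by measurable
  have cv: "convex_on UNIV (\<lambda>x::real. \<bar>x\<bar> powr p)" using convex_abs_powr assms(3) by blast
  have iq: "integrable M (\<lambda>x. \<bar>f x\<bar> powr p)" using assms(2) by (simp add: in_Lp_def)
  have AE: "AE x in M. \<bar>real_cond_exp M F f x\<bar> powr p \<le> real_cond_exp M F (\<lambda>x. \<bar>f x\<bar> powr p) x"
    by (rule real_cond_exp_jensens_inequality(2)[where I = UNIV and q = "\<lambda>x. \<bar>x\<bar> powr p", OF fi _ _ iq cv qm]) auto
  have i1: "integrable M (\<lambda>x. \<bar>real_cond_exp M F f x\<bar> powr p)"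
    using ce_in_Lp[OF assms] by (simp add: in_Lp_def)
  have i2: "integrable M (\<lambda>x. \<bar>f x\<bar> powr p)" using assms by (simp add: in_Lp_def)
  have "Np M p (real_cond_exp M F f) \<le> (\<integral>x. real_cond_exp M F (\<lambda>x. \<bar>f x\<bar> powr p) x \<partial>M)"
    unfolding Np_def by (rule integral_mono_AE[OF i1 real_cond_exp_int(1)[OF i2] AE])
  also have "\<dots> = Np M p f" unfolding Np_def by (rule real_cond_exp_int(2)[OF i2])
  finally show ?thesis .
qed

end




lemma energy_step:
  fixes p :: real and f :: "'a \<Rightarrow> real"
  assumes M: "prob_space M" and p: "1 < p" "p \<le> 2"
    and P: "finite_partition (space M) P" "P \<subseteq> sets M"
    and Q: "finite_partition (space M) Q" "Q \<subseteq> sets M"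
    and r: "refines Q P" and f: "in_Lp M p f"
  shows "Np M p (real_cond_exp M (part_algebra M P) f) powr (2 / p)
         + (p - 1) * Np M p (\<lambda>x. real_cond_exp M (part_algebra M Q) f x - real_cond_exp M (part_algebra M P) f x) powr (2 / p)
         \<le> Np M p (real_cond_exp M (part_algebra M Q) f) powr (2 / p)"
proof -
  interpret prob_space M by fact
  interpret FP: sigma_finite_subalgebra M "part_algebra M P" using part_sfs[OF M P(2)] .
  interpret FQ: sigma_finite_subalgebra M "part_algebra M Q" using part_sfs[OF M Q(2)] .
  have subGF: "subalgebra (part_algebra M Q) (part_algebra M P)" by (rule refine_subalg[OF P(1) Q(1) r])
  have subQ: "subalgebra M (part_algebra M Q)" by (rule part_subalg[OF Q(2)])
  define a where "a = real_cond_exp M (part_algebra M P) f"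
  define g where "g = real_cond_exp M (part_algebra M Q) f"
  define b where "b = (\<lambda>z. g z - a z)"
  have p1: "1 \<le> p" using p by simp
  have fi: "integrable M f" using in_Lp_integrable[OF f p1] .
  have la: "in_Lp M p a" unfolding a_def by (rule FP.ce_in_Lp[OF M f p1])
  have lg: "in_Lp M p g" unfolding g_def by (rule FQ.ce_in_Lp[OF M f p1])
  have lb: "in_Lp M p b" unfolding b_def using la lg p by (intro in_Lp_diff) auto
  have ia: "integrable M a" using in_Lp_integrable[OF la p1] .
  have ig: "integrable M g" using in_Lp_integrable[OF lg p1] .
  have ib: "integrable M b" using in_Lp_integrable[OF lb p1] .
  have am: "a \<in> borel_measurable (part_algebra M P)" unfolding a_def by simp
  have [measurable]: "a \<in> borel_measurable M" "g \<in> borel_measurable M" "b \<in> borel_measurable M"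
    using la lg lb by (auto simp: in_Lp_def)
  have contr: "Np M p a \<le> Np M p (\<lambda>z. a z + t * b z)" if t: "0 \<le> t" "t \<le> 1" for t
  proof -
    define h where "h = (\<lambda>z. a z + t * b z)"
    have itb: "integrable M (\<lambda>z. t * b z)" using ib by simp
    have lh: "in_Lp M p h" unfolding h_def using la lb p by (intro in_Lp_add in_Lp_cmult) auto
    have [measurable]: "h \<in> borel_measurable M" using lh by (simp add: in_Lp_def)
    have A1: "AE z in M. real_cond_exp M (part_algebra M P) h z
               = real_cond_exp M (part_algebra M P) a z + real_cond_exp M (part_algebra M P) (\<lambda>z. t * b z) z"
      unfolding h_def by (rule FP.real_cond_exp_add[OF ia itb])
    have A2: "AE z in M. real_cond_exp M (part_algebra M P) (\<lambda>z. t * b z) z = t * real_cond_exp M (part_algebra M P) b z"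
      by (rule FP.real_cond_exp_cmult[OF ib])
    have A3: "AE z in M. real_cond_exp M (part_algebra M P) b z
               = real_cond_exp M (part_algebra M P) g z - real_cond_exp M (part_algebra M P) a z"
      unfolding b_def by (rule FP.real_cond_exp_diff[OF ig ia])
    have A4: "AE z in M. real_cond_exp M (part_algebra M P) g z = a z"
      unfolding g_def a_def by (rule FP.real_cond_exp_nested_subalg[OF subQ subGF fi])
    have A5: "AE z in M. real_cond_exp M (part_algebra M P) a z = a z"
      by (rule FP.real_cond_exp_F_meas[OF ia am])
    have AE: "AE z in M. real_cond_exp M (part_algebra M P) h z = a z"
      using A1 A2 A3 A4 A5 by eventually_elim simp
    have "Np M p a = Np M p (real_cond_exp M (part_algebra M P) h)"
      unfolding Np_def by (rule integral_cong_AE) (use AE in auto)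
    also have "\<dots> \<le> Np M p h" by (rule FP.ce_contr[OF M lh p1])
    finally show ?thesis by (simp add: h_def)
  qed
  have RX: "Np M p a powr (2 / p) + (p - 1) * Np M p b powr (2 / p) \<le> Np M p (\<lambda>z. a z + b z) powr (2 / p)"
    by (rule ricard_xu[OF p la lb contr])
  have "(\<lambda>z. a z + b z) = g" by (simp add: b_def fun_eq_iff)
  with RX show ?thesis by (simp add: a_def g_def b_def)
qed

lemma step_gain:
  fixes p :: real and f :: "'a \<Rightarrow> real"
  assumes M: "prob_space M" and p: "1 \<le> p"
    and P: "finite_partition (space M) P" "P \<subseteq> sets M"
    and Q: "finite_partition (space M) Q" "Q \<subseteq> sets M"
    and f: "in_Lp M p f" and S: "S \<in> sets (part_algebra M Q)"
  shows "\<bar>set_lebesgue_integral M S (\<lambda>x. f x - real_cond_exp M (part_algebra M P) f x)\<bar>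
         \<le> Np M p (\<lambda>x. real_cond_exp M (part_algebra M Q) f x - real_cond_exp M (part_algebra M P) f x) powr (1 / p)"
proof -
  interpret prob_space M by fact
  interpret FP: sigma_finite_subalgebra M "part_algebra M P" using part_sfs[OF M P(2)] .
  interpret FQ: sigma_finite_subalgebra M "part_algebra M Q" using part_sfs[OF M Q(2)] .
  define a where "a = real_cond_exp M (part_algebra M P) f"
  define g where "g = real_cond_exp M (part_algebra M Q) f"
  have SM: "S \<in> sets M" using S part_subalg[OF Q(2)] by (auto simp: subalgebra_def)
  have fi: "integrable M f" using in_Lp_integrable[OF f p] .
  have la: "in_Lp M p a" unfolding a_def by (rule FP.ce_in_Lp[OF M f p])
  have lg: "in_Lp M p g" unfolding g_def by (rule FQ.ce_in_Lp[OF M f p])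
  have lb: "in_Lp M p (\<lambda>x. g x - a x)" using la lg p by (intro in_Lp_diff) auto
  have ia: "integrable M a" using in_Lp_integrable[OF la p] .
  have ig: "integrable M g" using in_Lp_integrable[OF lg p] .
  have si: "set_integrable M S h" if "integrable M h" for h :: "'a \<Rightarrow> real"
    unfolding set_integrable_def using integrable_mult_indicator[OF SM that] by simp
  have "set_lebesgue_integral M S (\<lambda>x. f x - a x) = set_lebesgue_integral M S f - set_lebesgue_integral M S a"
    by (rule set_integral_diff(2)[OF si[OF fi] si[OF ia]])
  also have "set_lebesgue_integral M S f = set_lebesgue_integral M S g"
    unfolding g_def by (rule FQ.real_cond_exp_intA[OF fi S])
  also have "set_lebesgue_integral M S g - set_lebesgue_integral M S a = set_lebesgue_integral M S (\<lambda>x. g x - a x)"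
    by (rule set_integral_diff(2)[OF si[OF ig] si[OF ia], symmetric])
  finally have "set_lebesgue_integral M S (\<lambda>x. f x - a x) = set_lebesgue_integral M S (\<lambda>x. g x - a x)" .
  moreover have "\<bar>set_lebesgue_integral M S (\<lambda>x. g x - a x)\<bar> \<le> Np M p (\<lambda>x. g x - a x) powr (1 / p)"
    by (rule abs_set_integral_le_Lp[OF SM lb p])
  ultimately show ?thesis by (simp add: a_def g_def)
qed




lemma refine_step:
  fixes M :: "'a measure" and \<Sigma>' :: "'a set set"
  assumes ks: "k_semiring k (space M) \<Sigma>'"
    and Q: "finite_partition (space M) Q" "Q \<subseteq> \<Sigma>'"
    and S: "S \<in> \<Sigma>'"
  shows "\<exists>Q'. finite_partition (space M) Q' \<and> Q' \<subseteq> \<Sigma>' \<and> card Q' \<le> (k + 1) * card Q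
           \<and> refines Q' Q \<and> S \<in> sets (part_algebra M Q')"
proof -
  have ks': "\<forall>A\<in>Q. \<exists>l R. 1 \<le> l \<and> l \<le> k \<and> (\<forall>i<l. R i \<in> \<Sigma>') \<and> disjoint_family_on R {..<l} \<and> A - S = (\<Union>i<l. R i)"
    using ks Q(2) S unfolding k_semiring_def by blast
  then obtain L RR where LR: "\<And>A. A \<in> Q \<Longrightarrow> 1 \<le> L A \<and> L A \<le> k \<and> (\<forall>i<L A. RR A i \<in> \<Sigma>')
          \<and> disjoint_family_on (RR A) {..<L A} \<and> A - S = (\<Union>i<L A. RR A i)"
    by metis
  have Sint: "\<And>A B. A \<in> \<Sigma>' \<Longrightarrow> B \<in> \<Sigma>' \<Longrightarrow> A \<inter> B \<in> \<Sigma>'" using ks by (auto simp: k_semiring_def)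
  have SP: "\<Sigma>' \<subseteq> Pow (space M)" using ks by (auto simp: k_semiring_def)
  have fQ: "finite Q" and pQ: "partition_on (space M) Q" using Q by (auto simp: finite_partition_def)
  have UQ: "\<Union>Q = space M" and dQ: "disjoint Q" using pQ by (auto simp: partition_on_def)
  define Q1 where "Q1 = (\<lambda>A. A \<inter> S) ` Q"
  define Q2 where "Q2 = (\<Union>A\<in>Q. RR A ` {..<L A})"
  define Q' where "Q' = (Q1 \<union> Q2) - {{}}"
  have fQ1: "finite Q1" using fQ by (simp add: Q1_def)
  have fQ2: "finite Q2" using fQ by (simp add: Q2_def)
  have fQ': "finite Q'" using fQ1 fQ2 by (simp add: Q'_def)
  have RRsub: "RR A i \<subseteq> A - S" if "A \<in> Q" "i < L A" for A i
    using LR[OF that(1)] that(2) by blast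
  have cQ1: "card Q1 \<le> card Q" unfolding Q1_def by (rule card_image_le[OF fQ])
  have cQ2: "card Q2 \<le> k * card Q"
  proof -
    have "card Q2 \<le> (\<Sum>A\<in>Q. card (RR A ` {..<L A}))" unfolding Q2_def by (rule card_UN_le[OF fQ])
    also have "\<dots> \<le> (\<Sum>A\<in>Q. k)"
    proof (rule sum_mono)
      fix A assume "A \<in> Q"
      have "card (RR A ` {..<L A}) \<le> card {..<L A}" by (rule card_image_le) simp
      also have "\<dots> \<le> k" using LR[OF \<open>A \<in> Q\<close>] by simp
      finally show "card (RR A ` {..<L A}) \<le> k" .
    qed
    also have "\<dots> = k * card Q" by simp
    finally show ?thesis .
  qed
  have card: "card Q' \<le> (k + 1) * card Q"
  proof -
    have "card Q' \<le> card (Q1 \<union> Q2)" unfolding Q'_def using fQ1 fQ2 by (intro card_mono) auto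
    also have "\<dots> \<le> card Q1 + card Q2" by (rule card_Un_le)
    also have "\<dots> \<le> (k + 1) * card Q" using cQ1 cQ2 by simp
    finally show ?thesis .
  qed
  have sub: "Q' \<subseteq> \<Sigma>'"
  proof
    fix X assume "X \<in> Q'"
    hence "X \<in> Q1 \<or> X \<in> Q2" by (auto simp: Q'_def)
    thus "X \<in> \<Sigma>'"
    proof
      assume "X \<in> Q1" then obtain A where "A \<in> Q" "X = A \<inter> S" by (auto simp: Q1_def)
      thus ?thesis using Sint Q(2) S by auto
    next
      assume "X \<in> Q2" then obtain A i where "A \<in> Q" "i < L A" "X = RR A i" by (auto simp: Q2_def)
      thus ?thesis using LR by auto
    qed
  qed
  have ref: "refines Q' Q"
    unfolding refines_def
  proof
    fix X assume "X \<in> Q'"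
    hence "X \<in> Q1 \<or> X \<in> Q2" by (auto simp: Q'_def)
    thus "\<exists>A\<in>Q. X \<subseteq> A"
    proof
      assume "X \<in> Q1" thus ?thesis by (auto simp: Q1_def)
    next
      assume "X \<in> Q2" then obtain A i where "A \<in> Q" "i < L A" "X = RR A i" by (auto simp: Q2_def)
      thus ?thesis using RRsub by blast
    qed
  qed
  have union: "\<Union>Q' = space M"
  proof -
    have "\<Union>Q' = \<Union>(Q1 \<union> Q2)" by (auto simp: Q'_def)
    also have "\<dots> = \<Union>Q"
    proof
      show "\<Union>(Q1 \<union> Q2) \<subseteq> \<Union>Q"
      proof
        fix x assume "x \<in> \<Union>(Q1 \<union> Q2)"
        then consider A where "A \<in> Q" "x \<in> A \<inter> S" | A i where "A \<in> Q" "i < L A" "x \<in> RR A i"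
          by (auto simp: Q1_def Q2_def)
        thus "x \<in> \<Union>Q"
        proof cases
          case 1 thus ?thesis by blast
        next
          case 2 thus ?thesis using RRsub[OF 2(1,2)] by blast
        qed
      qed
      show "\<Union>Q \<subseteq> \<Union>(Q1 \<union> Q2)"
      proof
        fix x assume "x \<in> \<Union>Q"
        then obtain A where A: "A \<in> Q" "x \<in> A" by auto
        show "x \<in> \<Union>(Q1 \<union> Q2)"
        proof (cases "x \<in> S")
          case True thus ?thesis using A by (auto simp: Q1_def)
        next
          case False
          hence "x \<in> (\<Union>i<L A. RR A i)" using LR[OF A(1)] A(2) by auto
          thus ?thesis using A by (auto simp: Q2_def)
        qed
      qed
    qed
    finally show ?thesis using UQ by simp
  qed
  have disj: "disjnt X Y" if X: "X \<in> Q'" and Y: "Y \<in> Q'" and XY: "X \<noteq> Y" for X Y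
  proof -
    have dA: "disjnt A A'" if "A \<in> Q" "A' \<in> Q" "A \<noteq> A'" for A A'
      using dQ that by (auto simp: pairwise_def)
    consider (11) A A' where "A \<in> Q" "A' \<in> Q" "X = A \<inter> S" "Y = A' \<inter> S"
      | (12) A A' i where "A \<in> Q" "A' \<in> Q" "X = A \<inter> S" "i < L A'" "Y = RR A' i"
      | (21) A A' i where "A \<in> Q" "A' \<in> Q" "Y = A \<inter> S" "i < L A'" "X = RR A' i"
      | (22) A A' i j where "A \<in> Q" "A' \<in> Q" "i < L A" "X = RR A i" "j < L A'" "Y = RR A' j"
    proof -
      have X': "(\<exists>A\<in>Q. X = A \<inter> S) \<or> (\<exists>A\<in>Q. \<exists>i<L A. X = RR A i)" using X by (auto simp: Q'_def Q1_def Q2_def)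
      have Y': "(\<exists>A\<in>Q. Y = A \<inter> S) \<or> (\<exists>A\<in>Q. \<exists>i<L A. Y = RR A i)" using Y by (auto simp: Q'_def Q1_def Q2_def)
      show ?thesis using X' Y' that by blast
    qed
    thus ?thesis
    proof cases
      case 11
      hence "A \<noteq> A'" using XY by auto
      thus ?thesis using dA[of A A'] 11 by (auto simp: disjnt_def)
    next
      case 12 thus ?thesis using RRsub[of A' i] by (auto simp: disjnt_def)
    next
      case 21 thus ?thesis using RRsub[of A' i] by (auto simp: disjnt_def)
    next
      case 22
      show ?thesis
      proof (cases "A = A'")
        case True
        hence "i \<noteq> j" using XY 22 by auto
        hence "RR A i \<inter> RR A j = {}" using LR[OF 22(1)] 22 True
          by (auto simp: disjoint_family_on_def)
        thus ?thesis using 22 True by (auto simp: disjnt_def)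
      next
        case False
        thus ?thesis using dA[of A A'] 22 RRsub[of A i] RRsub[of A' j] by (auto simp: disjnt_def)
      qed
    qed
  qed
  have part: "finite_partition (space M) Q'"
    unfolding finite_partition_def using fQ' union disj
    by (auto intro!: partition_onI simp: Q'_def)
  have QP': "Q' \<subseteq> Pow (space M)" using sub SP by blast
  have "S = \<Union>(Q1 - {{}})"
  proof -
    have SS: "S \<subseteq> space M" using S SP by auto
    show ?thesis
    proof
      show "S \<subseteq> \<Union>(Q1 - {{}})"
      proof
        fix x assume x: "x \<in> S"
        hence "x \<in> \<Union>Q" using SS UQ by auto
        then obtain A where A: "A \<in> Q" "x \<in> A" by auto
        hence "A \<inter> S \<in> Q1 - {{}}" using x by (auto simp: Q1_def)
        thus "x \<in> \<Union>(Q1 - {{}})" using A x by blast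
      qed
    qed (auto simp: Q1_def)
  qed
  also have "\<dots> \<in> sets (part_algebra M Q')"
    using fQ' QP' by (intro union_in_part) (auto simp: Q'_def)
  finally have "S \<in> sets (part_algebra M Q')" .
  thus ?thesis using part sub card ref by blast
qed




lemma sq_lt_powr:
  fixes c N p :: real
  assumes "0 \<le> c" "c < N powr (1 / p)" "0 \<le> N" "0 < p"
  shows "c^2 < N powr (2 / p)"
proof -
  define x where "x = N powr (1 / p)"
  have xp: "0 < x" using assms(1,2) unfolding x_def by linarith
  have "c^2 < x^2" using assms xp by (intro power_strict_mono) (auto simp: x_def)
  also have "x^2 = x powr 2" using xp by (simp add: powr_numeral)
  also have "\<dots> = N powr (1 / p * 2)" unfolding x_def by (rule powr_powr)
  finally show ?thesis by simp
qed

lemma Np_le1: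
  fixes N p :: real
  assumes "0 \<le> N" "N powr (1 / p) \<le> 1" "0 < p"
  shows "N \<le> 1"
proof (rule ccontr)
  assume "\<not> N \<le> 1"
  hence "1 powr (1 / p) < N powr (1 / p)" using assms by (intro powr_less_mono2) auto
  thus False using assms by simp
qed

lemma refines_refl: "refines P P"
  by (auto simp: refines_def)

lemma refines_trans: "refines Q' Q \<Longrightarrow> refines Q P \<Longrightarrow> refines Q' P"
  unfolding refines_def by (meson order_trans)

lemma energy_sum:
  fixes p :: real and f :: "nat \<Rightarrow> 'a \<Rightarrow> real"
  assumes M: "prob_space M" and p: "1 < p" "p \<le> 2"
    and P: "finite_partition (space M) P" "P \<subseteq> sets M"
    and Q: "finite_partition (space M) Q" "Q \<subseteq> sets M"
    and r: "refines Q P" and f: "\<And>i. i < l \<Longrightarrow> in_Lp M p (f i)"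
  shows "(\<Sum>i<l. Np M p (real_cond_exp M (part_algebra M P) (f i)) powr (2 / p))
         + (p - 1) * (\<Sum>i<l. Np M p (\<lambda>x. real_cond_exp M (part_algebra M Q) (f i) x
                                         - real_cond_exp M (part_algebra M P) (f i) x) powr (2 / p))
         \<le> (\<Sum>i<l. Np M p (real_cond_exp M (part_algebra M Q) (f i)) powr (2 / p))"
proof -
  have "(\<Sum>i<l. Np M p (real_cond_exp M (part_algebra M P) (f i)) powr (2 / p)
         + (p - 1) * Np M p (\<lambda>x. real_cond_exp M (part_algebra M Q) (f i) x
                                         - real_cond_exp M (part_algebra M P) (f i) x) powr (2 / p))
         \<le> (\<Sum>i<l. Np M p (real_cond_exp M (part_algebra M Q) (f i)) powr (2 / p))"
    by (rule sum_mono) (rule energy_step[OF M p P Q r f], simp)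
  thus ?thesis by (simp add: sum.distrib sum_distrib_left)
qed

lemma energy_bound:
  fixes p :: real and f :: "nat \<Rightarrow> 'a \<Rightarrow> real"
  assumes M: "prob_space M" and p: "1 < p" "p \<le> 2"
    and P: "P \<subseteq> sets M"
    and f: "\<And>i. i < l \<Longrightarrow> in_Lp M p (f i)" and f1: "\<And>i. i < l \<Longrightarrow> Lp_norm M p (f i) \<le> 1"
  shows "(\<Sum>i<l. Np M p (real_cond_exp M (part_algebra M P) (f i)) powr (2 / p)) \<le> real l"
proof -
  interpret FP: sigma_finite_subalgebra M "part_algebra M P" using part_sfs[OF M P] .
  have "(\<Sum>i<l. Np M p (real_cond_exp M (part_algebra M P) (f i)) powr (2 / p)) \<le> (\<Sum>i<l. 1)"
  proof (rule sum_mono)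
    fix i assume "i \<in> {..<l}"
    hence i: "i < l" by simp
    have "Np M p (f i) \<le> 1" using Np_le1[OF Np_nonneg, of M p "f i"] f1[OF i] p by (simp add: Lp_norm_Np)
    moreover have "Np M p (real_cond_exp M (part_algebra M P) (f i)) \<le> Np M p (f i)"
      using FP.ce_contr[OF M f[OF i]] p by simp
    ultimately have "Np M p (real_cond_exp M (part_algebra M P) (f i)) \<le> 1" by simp
    thus "Np M p (real_cond_exp M (part_algebra M P) (f i)) powr (2 / p) \<le> 1"
      using p Np_nonneg[of M p "real_cond_exp M (part_algebra M P) (f i)"] by (intro powr_le1) auto
  qed
  thus ?thesis by simp
qed

lemma energy_nonneg: "0 \<le> (\<Sum>i<l. Np M p (real_cond_exp M (part_algebra M P) (f i)) powr (2 / p))"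
  by (intro sum_nonneg) simp




theorem lemma3p5:
  fixes k l :: nat and \<sigma> p :: real and H :: "nat \<Rightarrow> real"
    and M :: "'a measure" and \<Sigma> :: "nat \<Rightarrow> 'a set set"
    and f :: "nat \<Rightarrow> 'a \<Rightarrow> real"
  assumes "k > 0" "l > 0" "0 < \<sigma>" "\<sigma> \<le> 1" "1 < p" "p \<le> 2"
    and "growth_function H"
    and "prob_space M"
    and "\<And>i. k_semiring k (space M) (\<Sigma> i)"
    and "\<And>i. \<Sigma> i \<subseteq> \<Sigma> (Suc i)"
    and "\<And>i. \<Sigma> i \<subseteq> sets M"
    and "\<And>i. i < l \<Longrightarrow> in_Lp M p (f i)"
    and "\<And>i. i < l \<Longrightarrow> Lp_norm M p (f i) \<le> 1"
  shows "\<exists>j < L_bound \<sigma> l p. \<exists>J. n_seq \<sigma> l p H j \<le> J \<and> J \<le> n_seq \<sigma> l p H (Suc j) \<and>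
          (\<exists>P Q. finite_partition (space M) P \<and> finite_partition (space M) Q \<and>
             P \<subseteq> \<Sigma> (n_seq \<sigma> l p H j) \<and> Q \<subseteq> \<Sigma> J \<and>
             card P \<le> (k + 1) ^ (n_seq \<sigma> l p H j) \<and> card Q \<le> (k + 1) ^ J \<and>
             refines Q P \<and>
             (\<forall>i < l.
                Lp_norm M p (\<lambda>x. real_cond_exp M (part_algebra M Q) (f i) x
                                 - real_cond_exp M (part_algebra M P) (f i) x) \<le> \<sigma> \<and>
                unif_norm M (\<Sigma> (Suc J)) (\<lambda>x. f i x - real_cond_exp M (part_algebra M Q) (f i) x)
                  \<le> 1 / H (n_seq \<sigma> l p H j)))"
proof -
  let ?Main = ?thesis
  note A = assms
  interpret prob_space M by (rule A(8))
  define n where "n = n_seq \<sigma> l p H"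
  define en where "en Q = (\<Sum>i<l. Np M p (real_cond_exp M (part_algebra M Q) (f i)) powr (2 / p))" for Q
  define good where "good m Q \<longleftrightarrow> finite_partition (space M) Q \<and> Q \<subseteq> \<Sigma> m \<and> card Q \<le> (k + 1) ^ m" for m Q
  have p: "1 < p" "p \<le> 2" using A by auto
  have M: "prob_space M" by (rule A(8))
  have \<Sigma>mono: "\<Sigma> m \<subseteq> \<Sigma> m'" if "m \<le> m'" for m m'
    by (rule lift_Suc_mono_le[of \<Sigma>, OF A(10) that])
  have goodM: "Q \<subseteq> sets M" if "good m Q" for m Q
    using that A(11) by (auto simp: good_def)
  have good_mono: "good m' Q" if "good m Q" "m \<le> m'" for m m' Q
  proof -
    have "(k + 1) ^ m \<le> (k + 1) ^ m'" using that(2) by (intro power_increasing) auto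
    thus ?thesis using that \<Sigma>mono[OF that(2)] by (auto simp: good_def)
  qed
  have Hpos: "0 < H m" for m
    using A(7) unfolding growth_function_def by (smt (verit) of_nat_0_le_iff)
  have en_le: "en Q \<le> real l" if "good m Q" for m Q
    unfolding en_def by (rule energy_bound[OF M p goodM[OF that] A(12) A(13)])
  have en_nn: "0 \<le> en Q" for Q unfolding en_def by (rule energy_nonneg)
  have en_step: "en P + (p - 1) * (\<Sum>i<l. Np M p (\<lambda>x. real_cond_exp M (part_algebra M Q) (f i) x
                                         - real_cond_exp M (part_algebra M P) (f i) x) powr (2 / p)) \<le> en Q"
    if "good m P" "good m' Q" "refines Q P" for m m' P Q
    unfolding en_def using that
    by (intro energy_sum[OF M p _ goodM[OF that(1)] _ goodM[OF that(2)] that(3) A(12)]) (auto simp: good_def)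
  have en_mono: "en P \<le> en Q" if "good m P" "good m' Q" "refines Q P" for m m' P Q
  proof -
    have "0 \<le> (p - 1) * (\<Sum>i<l. Np M p (\<lambda>x. real_cond_exp M (part_algebra M Q) (f i) x
                                         - real_cond_exp M (part_algebra M P) (f i) x) powr (2 / p))"
      using p by (intro mult_nonneg_nonneg sum_nonneg) auto
    thus ?thesis using en_step[OF that] by linarith
  qed
  have en_gain: "en P + (p - 1) * Np M p (\<lambda>x. real_cond_exp M (part_algebra M Q) (f i) x
                                         - real_cond_exp M (part_algebra M P) (f i) x) powr (2 / p) \<le> en Q"
    if "good m P" "good m' Q" "refines Q P" "i < l" for m m' P Q i
  proof -
    have "Np M p (\<lambda>x. real_cond_exp M (part_algebra M Q) (f i) x
                                         - real_cond_exp M (part_algebra M P) (f i) x) powr (2 / p)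
          \<le> (\<Sum>i<l. Np M p (\<lambda>x. real_cond_exp M (part_algebra M Q) (f i) x
                                         - real_cond_exp M (part_algebra M P) (f i) x) powr (2 / p))"
      using that(4) by (intro member_le_sum) auto
    hence "(p - 1) * Np M p (\<lambda>x. real_cond_exp M (part_algebra M Q) (f i) x
                                         - real_cond_exp M (part_algebra M P) (f i) x) powr (2 / p)
          \<le> (p - 1) * (\<Sum>i<l. Np M p (\<lambda>x. real_cond_exp M (part_algebra M Q) (f i) x
                                         - real_cond_exp M (part_algebra M P) (f i) x) powr (2 / p))"
      using p by (intro mult_left_mono) auto
    thus ?thesis using en_step[OF that(1-3)] by linarith
  qed
  have nS: "n (Suc j) = n j + nat \<lceil>\<sigma>^2 * real l * (H (n j))^2 / (p - 1)\<rceil>" for j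
    by (simp add: n_def)
  {
    assume neg: "\<not> ?Main"
    have block: "\<exists>Q'. good (n (Suc j)) Q' \<and> en P + (p - 1) * \<sigma>^2 < en Q'"
      if j: "j < L_bound \<sigma> l p" and P: "good (n j) P" for j P
    proof -
      define c where "c = 1 / H (n j)"
      define T where "T = nat \<lceil>\<sigma>^2 * real l * (H (n j))^2 / (p - 1)\<rceil>"
      have nST: "n (Suc j) = n j + T" by (simp add: nS T_def)
      have cpos: "0 < c" using Hpos by (simp add: c_def)
      have inner: "(\<exists>J Q. n j \<le> J \<and> J \<le> n (Suc j) \<and> good J Q \<and> refines Q P \<and>
                      (\<exists>i<l. \<sigma> < Lp_norm M p (\<lambda>x. real_cond_exp M (part_algebra M Q) (f i) x
                                                 - real_cond_exp M (part_algebra M P) (f i) x)))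
                 \<or> (\<exists>Q. good (n j + t) Q \<and> refines Q P \<and> (t = 0 \<or> en P + real t * (p - 1) * c^2 < en Q))"
        if "t \<le> T" for t
        using that
      proof (induction t)
        case 0
        have "good (n j + 0) P" using P by simp
        thus ?case using refines_refl[of P] by blast
      next
        case (Suc t)
        hence tT: "t < T" by simp
        have tT': "t \<le> T" using tT by simp
        from Suc.IH[OF tT'] show ?case
        proof
          assume "\<exists>J Q. n j \<le> J \<and> J \<le> n (Suc j) \<and> good J Q \<and> refines Q P \<and>
                      (\<exists>i<l. \<sigma> < Lp_norm M p (\<lambda>x. real_cond_exp M (part_algebra M Q) (f i) x
                                                 - real_cond_exp M (part_algebra M P) (f i) x))"
          thus ?case by blast
        next
          assume "\<exists>Q. good (n j + t) Q \<and> refines Q P \<and> (t = 0 \<or> en P + real t * (p - 1) * c^2 < en Q)"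
          then obtain Q where Q: "good (n j + t) Q" "refines Q P" and tc: "t = 0 \<or> en P + real t * (p - 1) * c^2 < en Q"
            by blast
          define J where "J = n j + t"
          have J: "n j \<le> J" "J \<le> n (Suc j)" using tT by (auto simp: J_def nST)
          have QJ: "good J Q" using Q by (simp add: J_def)
          show ?case
          proof (cases "\<exists>i<l. \<sigma> < Lp_norm M p (\<lambda>x. real_cond_exp M (part_algebra M Q) (f i) x
                                                 - real_cond_exp M (part_algebra M P) (f i) x)")
            case True
            thus ?thesis using J QJ Q(2) by blast
          next
            case False
            hence drift: "\<forall>i<l. Lp_norm M p (\<lambda>x. real_cond_exp M (part_algebra M Q) (f i) x
                                                 - real_cond_exp M (part_algebra M P) (f i) x) \<le> \<sigma>"
              using False by (meson not_less)
            have "\<not> (\<forall>i<l. unif_norm M (\<Sigma> (Suc J)) (\<lambda>x. f i x - real_cond_exp M (part_algebra M Q) (f i) x) \<le> c)"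
            proof
              assume unif: "\<forall>i<l. unif_norm M (\<Sigma> (Suc J)) (\<lambda>x. f i x - real_cond_exp M (part_algebra M Q) (f i) x) \<le> c"
              have "?Main"
                using j J P QJ Q(2) drift unif unfolding good_def c_def n_def by blast
              with neg show False by (rule notE)
            qed
            then obtain i0 where i0: "i0 < l"
              and big: "c < unif_norm M (\<Sigma> (Suc J)) (\<lambda>x. f i0 x - real_cond_exp M (part_algebra M Q) (f i0) x)"
              by (auto simp: not_le)
            obtain S where S: "S \<in> \<Sigma> (Suc J)"
              and Sbig: "c < \<bar>set_lebesgue_integral M S (\<lambda>x. f i0 x - real_cond_exp M (part_algebra M Q) (f i0) x)\<bar>"
            proof (rule ccontr)
              assume "\<not> thesis"
              hence "\<forall>S\<in>\<Sigma> (Suc J). \<bar>set_lebesgue_integral M S (\<lambda>x. f i0 x - real_cond_exp M (part_algebra M Q) (f i0) x)\<bar> \<le> c"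
                using that \<open>\<not> thesis\<close> by (meson not_less)
              moreover have "\<Sigma> (Suc J) \<noteq> {}" using A(9)[of "Suc J"] by (auto simp: k_semiring_def)
              ultimately have "unif_norm M (\<Sigma> (Suc J)) (\<lambda>x. f i0 x - real_cond_exp M (part_algebra M Q) (f i0) x) \<le> c"
                unfolding unif_norm_def by (intro cSUP_least) auto
              with big show False by simp
            qed
            have QS: "Q \<subseteq> \<Sigma> (Suc J)" using QJ \<Sigma>mono[of J "Suc J"] by (auto simp: good_def)
            obtain Q' where Q': "finite_partition (space M) Q'" "Q' \<subseteq> \<Sigma> (Suc J)"
                "card Q' \<le> (k + 1) * card Q" "refines Q' Q" "S \<in> sets (part_algebra M Q')"
              using refine_step[OF A(9)[of "Suc J"] _ QS S] QJ by (auto simp: good_def)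
            have gQ': "good (Suc J) Q'"
            proof -
              have "card Q \<le> (k + 1) ^ J" using QJ by (simp add: good_def)
              hence "(k + 1) * card Q \<le> (k + 1) * (k + 1) ^ J" by (rule mult_left_mono) simp
              thus ?thesis using Q' by (auto simp: good_def)
            qed
            have rQ'P: "refines Q' P" using refines_trans[OF Q'(4) Q(2)] .
            have gain: "\<bar>set_lebesgue_integral M S (\<lambda>x. f i0 x - real_cond_exp M (part_algebra M Q) (f i0) x)\<bar>
              \<le> Np M p (\<lambda>x. real_cond_exp M (part_algebra M Q') (f i0) x - real_cond_exp M (part_algebra M Q) (f i0) x) powr (1 / p)"
              using step_gain[OF M _ _ goodM[OF QJ] Q'(1) goodM[OF gQ'] A(12)[OF i0] Q'(5)] QJ p
              by (auto simp: good_def)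
            have csq: "c^2 < Np M p (\<lambda>x. real_cond_exp M (part_algebra M Q') (f i0) x - real_cond_exp M (part_algebra M Q) (f i0) x) powr (2 / p)"
              using sq_lt_powr[of c] cpos Sbig gain Np_nonneg p by (meson less_eq_real_def less_le_trans order_less_le_trans zero_less_one less_trans)
            have "en Q + (p - 1) * c^2 < en Q'"
            proof -
              have "(p - 1) * c^2 < (p - 1) * Np M p (\<lambda>x. real_cond_exp M (part_algebra M Q') (f i0) x - real_cond_exp M (part_algebra M Q) (f i0) x) powr (2 / p)"
                using csq p by (intro mult_strict_left_mono) auto
              thus ?thesis using en_gain[OF QJ gQ' Q'(4) i0] by linarith
            qed
            moreover have "en P \<le> en Q" by (rule en_mono[OF P QJ Q(2)])
            ultimately have "en P + real (Suc t) * (p - 1) * c^2 < en Q'"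
              using tc by (auto simp: algebra_simps)
            moreover have "good (n j + Suc t) Q'" using gQ' by (simp add: J_def)
            ultimately show ?thesis using rQ'P by blast
          qed
        qed
      qed
      from inner[OF order_refl] show ?thesis
      proof
        assume "\<exists>J Q. n j \<le> J \<and> J \<le> n (Suc j) \<and> good J Q \<and> refines Q P \<and>
                      (\<exists>i<l. \<sigma> < Lp_norm M p (\<lambda>x. real_cond_exp M (part_algebra M Q) (f i) x
                                                 - real_cond_exp M (part_algebra M P) (f i) x))"
        then obtain J Q i where J: "n j \<le> J" "J \<le> n (Suc j)" and QJ: "good J Q" and r: "refines Q P" and i: "i < l"
          and d: "\<sigma> < Lp_norm M p (\<lambda>x. real_cond_exp M (part_algebra M Q) (f i) x
                                                 - real_cond_exp M (part_algebra M P) (f i) x)"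
          by blast
        have "\<sigma>^2 < Np M p (\<lambda>x. real_cond_exp M (part_algebra M Q) (f i) x
                                                 - real_cond_exp M (part_algebra M P) (f i) x) powr (2 / p)"
          using sq_lt_powr[of \<sigma>, OF _ d[unfolded Lp_norm_Np] Np_nonneg] A(3) p by auto
        hence "(p - 1) * \<sigma>^2 < (p - 1) * Np M p (\<lambda>x. real_cond_exp M (part_algebra M Q) (f i) x
                                                 - real_cond_exp M (part_algebra M P) (f i) x) powr (2 / p)"
          using p by (intro mult_strict_left_mono) auto
        hence "en P + (p - 1) * \<sigma>^2 < en Q" using en_gain[OF P QJ r i] by linarith
        moreover have "good (n (Suc j)) Q" using good_mono[OF QJ J(2)] .
        ultimately show ?thesis by blast
      next
        assume "\<exists>Q. good (n j + T) Q \<and> refines Q P \<and> (T = 0 \<or> en P + real T * (p - 1) * c^2 < en Q)"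
        then obtain Q where Q: "good (n j + T) Q" and tc: "T = 0 \<or> en P + real T * (p - 1) * c^2 < en Q"
          by blast
        define X where "X = \<sigma>^2 * real l * (H (n j))^2 / (p - 1)"
        have Xpos: "0 < X" unfolding X_def using A(2,3) p Hpos[of "n j"]
          by (intro divide_pos_pos mult_pos_pos) auto
        have TX: "X \<le> real T" unfolding T_def X_def[symmetric] by linarith
        have T0: "T \<noteq> 0" using Xpos TX by auto
        have "real T * (p - 1) * c^2 \<ge> X * (p - 1) * c^2"
          using TX p by (intro mult_right_mono) auto
        also have "X * (p - 1) * c^2 = \<sigma>^2 * real l"
          using p Hpos[of "n j"] by (simp add: X_def c_def field_simps)
        also have "\<sigma>^2 * real l \<ge> (p - 1) * \<sigma>^2"
        proof -
          have "(p - 1) * \<sigma>^2 \<le> 1 * \<sigma>^2" using p by (intro mult_right_mono) auto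
          also have "\<dots> \<le> real l * \<sigma>^2" using A(2) by (intro mult_right_mono) auto
          finally show ?thesis by (simp add: mult.commute)
        qed
        finally have "(p - 1) * \<sigma>^2 \<le> real T * (p - 1) * c^2" .
        hence "en P + (p - 1) * \<sigma>^2 < en Q" using tc T0 by linarith
        moreover have "good (n (Suc j)) Q" using Q by (simp add: nST)
        ultimately show ?thesis by blast
      qed
    qed
    define L where "L = L_bound \<sigma> l p"
    have outer: "\<exists>Q. good (n j) Q \<and> (j = 0 \<or> real j * ((p - 1) * \<sigma>^2) < en Q)" if "j \<le> L" for j
      using that
    proof (induction j)
      case 0
      have ne: "space M \<noteq> {}" using A(9)[of 0] by (simp add: k_semiring_def)
      have "good (n 0) {space M}"
        using A(9)[of 0] ne by (auto simp: good_def n_def finite_partition_def partition_on_space k_semiring_def)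
      thus ?case by blast
    next
      case (Suc j)
      hence jL: "j < L" by simp
      from Suc.IH jL obtain Q where Q: "good (n j) Q" and e: "j = 0 \<or> real j * ((p - 1) * \<sigma>^2) < en Q" by auto
      obtain Q' where Q': "good (n (Suc j)) Q'" "en Q + (p - 1) * \<sigma>^2 < en Q'"
        using block[OF jL[unfolded L_def] Q] by blast
      have "real (Suc j) * ((p - 1) * \<sigma>^2) < en Q'"
        using e Q'(2) en_nn[of Q] by (auto simp: algebra_simps)
      thus ?case using Q'(1) by blast
    qed
    have Lpos: "0 < real l / (\<sigma>^2 * (p - 1))" using A(2,3) p by simp
    have LX: "real l / (\<sigma>^2 * (p - 1)) \<le> real L" unfolding L_def L_bound_def by linarith
    hence L0: "L \<noteq> 0" using Lpos by auto
    from outer[OF order_refl] L0 obtain Q where Q: "good (n L) Q" "real L * ((p - 1) * \<sigma>^2) < en Q" by auto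
    have "real l \<le> real L * ((p - 1) * \<sigma>^2)"
      using LX A(3) p by (simp add: field_simps)
    moreover have "en Q \<le> real l" by (rule en_le[OF Q(1)])
    ultimately have False using Q(2) by linarith
  }
  thus ?thesis by blast
qed


end
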